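(* Let $d\ge2$ be an integer, let $\lambda,D_1,\dots,D_d$ be real constants and $D=\sum_{i=1}^dD_i$. There exists $L=(L_1,\dots,L_d)\in C^1([0,1];\mathbb{R}^d)$ satisfying $$L_i'=-\Big(\sum_{k=1}^dL_k\Big)L_i-\lambda\ \text{ on }[0,1]\quad\text{and}\quad\int_0^1L_i(r)\,dr=D_i\qquad(i=1,\dots,d)$$ if and only if $\lambda<\pi^2/d$. Moreover, such a solution is unique. *)

theory Defs
  imports "HOL-Analysis.Analysis"
begin

definition C1_01 :: "(real \<Rightarrow> real) \<Rightarrow> bool" where
  "C1_01 f \<longleftrightarrow> (\<exists>f'. continuous_on {0..1} f' \<and>
      (\<forall>r\<in>{0..1}. (f has_real_derivative f' r) (at r within {0..1})))"

definition is_sol :: "nat \<Rightarrow> real \<Rightarrow> (nat \<Rightarrow> real) \<Rightarrow> (nat \<Rightarrow> real \<Rightarrow> real) \<Rightarrow> bool" where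
  "is_sol d lam D L \<longleftrightarrow>
     (\<forall>i<d. C1_01 (L i) \<and>
        (\<forall>r\<in>{0..1}. (L i has_real_derivative
              (- (\<Sum>k<d. L k r) * L i r - lam)) (at r within {0..1})) \<and>
        (L i has_integral D i) {0..1})"

end

theory Submission
  imports Defs
begin

lemma deriv_cont01:
  assumes "\<forall>r\<in>{0..1::real}. (f has_real_derivative f' r) (at r within {0..1})"
  shows "continuous_on {0..1} f"
  unfolding continuous_on_eq_continuous_within
  using assms DERIV_continuous by blast

lemma int_pos:
  fixes f :: "real \<Rightarrow> real"
  assumes "continuous_on {0..1} f" "\<forall>x\<in>{0..1}. f x > 0" "(f has_integral I) {0..1}"
  shows "I > 0"
proof -
  obtain x0 where x0: "x0 \<in> {0..1}" "\<forall>y\<in>{0..1}. f x0 \<le> f y"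
    using continuous_attains_inf[of "{0..1::real}" f] assms(1) by auto
  have "((\<lambda>x::real. f x0) has_integral f x0) {0..1}"
    using has_integral_const_real[of "f x0" 0 1] by simp
  then have "f x0 \<le> I" using has_integral_le[OF _ assms(3)] x0 by blast
  with assms(2) x0 show ?thesis by force
qed

lemma zero_int_unique:
  fixes w a :: "real \<Rightarrow> real"
  assumes ca: "continuous_on {0..1} a"
    and dw: "\<forall>r\<in>{0..1}. (w has_real_derivative (- a r * w r)) (at r within {0..1})"
    and iw: "(w has_integral 0) {0..1}"
  shows "\<forall>r\<in>{0..1}. w r = 0"
proof -
  define P where "P x = integral {0..x} a" for x
  have dP: "(P has_real_derivative a r) (at r within {0..1})" if "r \<in> {0..1}" for r
    unfolding P_def[abs_def] using integral_has_real_derivative[OF ca that] .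
  have d0: "((\<lambda>x. w x * exp (P x)) has_field_derivative 0) (at r within {0..1})"
    if "r \<in> {0..1}" for r
  proof -
    have "((\<lambda>x. w x * exp (P x)) has_field_derivative
        (- a r * w r) * exp (P r) + w r * (exp (P r) * a r)) (at r within {0..1})"
    proof -
      have dwr: "(w has_real_derivative (- a r * w r)) (at r within {0..1})" using dw that by blast
      show ?thesis by (rule derivative_eq_intros dwr dP[OF that] refl | simp)+
    qed
    moreover have "(- a r * w r) * exp (P r) + w r * (exp (P r) * a r) = 0"
      by (simp add: algebra_simps)
    ultimately show ?thesis by simp
  qed
  obtain K where K: "\<forall>x\<in>{0..1}. w x * exp (P x) = K"
    using has_field_derivative_zero_constant[of "{0..1::real}", OF convex_real_interval(5) d0] by blast
  have wK: "w x = K * exp (- P x)" if "x \<in> {0..1}" for x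
    using K that by (metis exp_minus_inverse mult.assoc mult.commute mult_1)
  show ?thesis
  proof (cases "K = 0")
    case True then show ?thesis using wK by simp
  next
    case False
    have cP: "continuous_on {0..1} P" using deriv_cont01 dP by blast
    have ce: "continuous_on {0..1} (\<lambda>x. exp (- P x))"
      by (intro continuous_intros cP)
    obtain J where J: "((\<lambda>x. exp (- P x)) has_integral J) {0..1}"
      using integrable_continuous_interval[OF ce] by (auto simp: integrable_on_def)
    have Jp: "J > 0" using int_pos[OF ce _ J] by simp
    have "((\<lambda>x. K * exp (- P x)) has_integral K * J) {0..1}"
      using has_integral_mult_right[OF J] .
    then have "(w has_integral K * J) {0..1}"
      using has_integral_cong[of "{0..1}" w "\<lambda>x. K * exp (- P x)"] wK by blast
    then have "K * J = 0" using has_integral_unique iw by blast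
    with False Jp show ?thesis by simp
  qed
qed


lemma no_sol:
  fixes S :: "real \<Rightarrow> real"
  assumes dS: "\<forall>r\<in>{0..1}. (S has_real_derivative (-(S r)\<^sup>2 - mu)) (at r within {0..1})"
    and mu: "mu \<ge> pi\<^sup>2"
  shows False
proof -
  define f where "f x = arctan (S x / pi) + pi * x" for x
  have cS: "continuous_on {0..1} S" using deriv_cont01[OF dS] .
  have cf: "continuous_on {0..1} f" unfolding f_def[abs_def]
    by (intro continuous_intros cS) auto
  have "f 1 \<le> f 0"
  proof (rule DERIV_nonpos_imp_decreasing_open[of 0 1 f, OF _ _ cf])
    fix x :: real assume x: "0 < x" "x < 1"
    have dx: "(S has_real_derivative (-(S x)\<^sup>2 - mu)) (at x)"
    proof -
      have "(S has_real_derivative (-(S x)\<^sup>2 - mu)) (at x within {0..1})" using dS x by auto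
      moreover have "at x within {0..1} = at x" using at_within_Icc_at[of 0 x 1] x by simp
      ultimately show ?thesis by simp
    qed
    define t where "t = 1 + (S x / pi)\<^sup>2"
    have tp: "t > 0" unfolding t_def by (simp add: add_pos_nonneg)
    have "(f has_real_derivative inverse t * ((-(S x)\<^sup>2 - mu) / pi) + pi) (at x)"
      unfolding f_def[abs_def] t_def
      by (rule derivative_eq_intros dx refl | simp)+
    moreover have "inverse t * ((-(S x)\<^sup>2 - mu) / pi) + pi \<le> 0"
    proof -
      have "(-(S x)\<^sup>2 - mu) / pi \<le> - pi * t"
        using mu pi_gt_zero unfolding t_def by (simp add: field_simps power2_eq_square)
      then have "inverse t * ((-(S x)\<^sup>2 - mu) / pi) \<le> inverse t * (- pi * t)"
        using tp by (intro mult_left_mono) auto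
      also have "\<dots> = - pi" using tp by simp
      finally show ?thesis by simp
    qed
    ultimately show "\<exists>y. (f has_real_derivative y) (at x) \<and> y \<le> 0" by blast
  qed simp
  then have "arctan (S 1 / pi) + pi \<le> arctan (S 0 / pi)" unfolding f_def by simp
  moreover have "- pi / 2 < arctan (S 1 / pi)" "arctan (S 0 / pi) < pi / 2"
    using arctan_bounded by auto
  ultimately show False by simp
qed

lemma sol_props:
  assumes "is_sol d lam D L"
  shows "\<forall>r\<in>{0..1}. ((\<lambda>r. \<Sum>k<d. L k r) has_real_derivative
            (-(\<Sum>k<d. L k r)\<^sup>2 - real d * lam)) (at r within {0..1})"
    and "((\<lambda>r. \<Sum>k<d. L k r) has_integral (\<Sum>k<d. D k)) {0..1}"
proof -
  show "\<forall>r\<in>{0..1}. ((\<lambda>r. \<Sum>k<d. L k r) has_real_derivative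
            (-(\<Sum>k<d. L k r)\<^sup>2 - real d * lam)) (at r within {0..1})"
  proof
    fix r :: real assume r: "r \<in> {0..1}"
    have "((\<lambda>r. \<Sum>k<d. L k r) has_real_derivative
          (\<Sum>k<d. - (\<Sum>k<d. L k r) * L k r - lam)) (at r within {0..1})"
      using assms r unfolding is_sol_def by (intro DERIV_sum) auto
    moreover have "(\<Sum>k<d. - (\<Sum>k<d. L k r) * L k r - lam) = -(\<Sum>k<d. L k r)\<^sup>2 - real d * lam"
      by (simp add: sum_subtractf sum_negf sum_distrib_left[symmetric] power2_eq_square)
    ultimately show "((\<lambda>r. \<Sum>k<d. L k r) has_real_derivative
            (-(\<Sum>k<d. L k r)\<^sup>2 - real d * lam)) (at r within {0..1})" by simp
  qed
  show "((\<lambda>r. \<Sum>k<d. L k r) has_integral (\<Sum>k<d. D k)) {0..1}"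
    using assms unfolding is_sol_def by (intro has_integral_sum) auto
qed


lemma sc_exists:
  fixes mu :: real
  assumes "mu < pi\<^sup>2"
  shows "\<exists>s c. (\<forall>r. (s has_real_derivative c r) (at r)) \<and>
     (\<forall>r. (c has_real_derivative (- mu * s r)) (at r)) \<and>
     (\<forall>r. 0 < r \<and> r \<le> 1 \<longrightarrow> s r > 0) \<and> s 0 = 0"
proof (cases "mu > 0")
  case True
  define k where "k = sqrt mu"
  have kp: "k > 0" using True k_def by simp
  have kpi: "k < pi" unfolding k_def using assms True
  proof -
    have "sqrt mu < sqrt (pi\<^sup>2)" using assms real_sqrt_less_mono by blast
    then show "sqrt mu < pi" by simp
  qed
  have kk: "k * k = mu" unfolding k_def using True by simp
  show ?thesis
  proof (intro exI conjI allI impI)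
    fix r :: real
    show "((\<lambda>r. sin (k * r) / k) has_real_derivative cos (k * r)) (at r)"
      using DERIV_divide[OF DERIV_chain2[OF DERIV_sin DERIV_cmult_Id[of k]] DERIV_const[of k]] kp
      by simp
    show "((\<lambda>r. cos (k * r)) has_real_derivative (- mu * (sin (k * r) / k))) (at r)"
      using DERIV_chain2[OF DERIV_cos DERIV_cmult_Id[of k r]] kp
      by (simp add: kk[symmetric] mult.commute)
  next
    fix r :: real assume r: "0 < r \<and> r \<le> 1"
    have "k * r \<le> k" using r kp by (simp add: mult_left_le)
    then have "k * r < pi" using kpi by linarith
    then have "0 < sin (k * r)" using r kp by (intro sin_gt_zero) auto
    then show "0 < sin (k * r) / k" using kp by simp
  qed simp
next
  case False
  show ?thesis
  proof (cases "mu = 0")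
    case True
    show ?thesis
      by (rule exI[of _ "\<lambda>r. r"], rule exI[of _ "\<lambda>r. 1"])
         (auto simp: True intro!: derivative_eq_intros)
  next
    case F2: False
    define k where "k = sqrt (- mu)"
    have kp: "k > 0" using False F2 k_def by simp
    have kk: "k * k = - mu" unfolding k_def using False by simp
    show ?thesis
    proof (intro exI conjI allI impI)
      fix r :: real
      show "((\<lambda>r. sinh (k * r) / k) has_real_derivative cosh (k * r)) (at r)"
        using DERIV_divide[OF has_field_derivative_sinh[OF DERIV_cmult_Id[of k]] DERIV_const[of k]] kp
        by simp
      show "((\<lambda>r. cosh (k * r)) has_real_derivative (- mu * (sinh (k * r) / k))) (at r)"
        using has_field_derivative_cosh[OF DERIV_cmult_Id[of k r]] kp
        by (simp add: minus_equation_iff[of mu] kk[symmetric] mult.commute)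
    next
      fix r :: real assume r: "0 < r \<and> r \<le> 1"
      then show "0 < sinh (k * r) / k" using kp by simp
    qed simp
  qed
qed


lemma u_exists:
  fixes mu D0 :: real
  assumes "mu < pi\<^sup>2"
  shows "\<exists>u u1. (\<forall>r. (u has_real_derivative u1 r) (at r)) \<and>
     (\<forall>r. (u1 has_real_derivative (- mu * u r)) (at r)) \<and>
     (\<forall>r\<in>{0..1}. u r > 0) \<and> ((\<lambda>r. u1 r / u r) has_integral D0) {0..1}"
proof -
  obtain s c where ds: "\<And>r. (s has_real_derivative c r) (at r)"
    and dc: "\<And>r. (c has_real_derivative (- mu * s r)) (at r)"
    and sp: "\<And>r. 0 < r \<Longrightarrow> r \<le> 1 \<Longrightarrow> s r > 0" and s0: "s 0 = 0"
    using sc_exists[OF assms] by blast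
  define E where "E = exp D0"
  have Ep: "E > 0" unfolding E_def by simp
  define u where "u r = s (1 - r) + E * s r" for r
  define u1 where "u1 r = - c (1 - r) + E * c r" for r
  have du: "(u has_real_derivative u1 r) (at r)" for r
  proof -
    have "((\<lambda>r. s (1 - r)) has_real_derivative c (1 - r) * (0 - 1)) (at r)"
      using DERIV_chain2[OF ds DERIV_diff[OF DERIV_const[of 1] DERIV_ident]] by simp
    moreover have "((\<lambda>r. E * s r) has_real_derivative E * c r) (at r)"
      by (rule DERIV_cmult[OF ds])
    ultimately have "(u has_real_derivative c (1 - r) * (0 - 1) + E * c r) (at r)"
      unfolding u_def[abs_def] by (rule DERIV_add)
    then show ?thesis unfolding u1_def by simp
  qed
  have du1: "(u1 has_real_derivative (- mu * u r)) (at r)" for r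
  proof -
    have "((\<lambda>r. c (1 - r)) has_real_derivative (- mu * s (1 - r)) * (0 - 1)) (at r)"
      using DERIV_chain2[OF dc DERIV_diff[OF DERIV_const[of 1] DERIV_ident]] by simp
    then have "((\<lambda>r. - c (1 - r)) has_real_derivative - ((- mu * s (1 - r)) * (0 - 1))) (at r)"
      by (rule DERIV_minus)
    moreover have "((\<lambda>r. E * c r) has_real_derivative E * (- mu * s r)) (at r)"
      by (rule DERIV_cmult[OF dc])
    ultimately have "(u1 has_real_derivative - ((- mu * s (1 - r)) * (0 - 1)) + E * (- mu * s r)) (at r)"
      unfolding u1_def[abs_def] by (rule DERIV_add)
    then show ?thesis unfolding u_def by (simp add: algebra_simps)
  qed
  have sn: "s r \<ge> 0" if "r \<in> {0..1}" for r
    using that sp[of r] s0 by (cases "r = 0") auto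
  have up: "u r > 0" if r: "r \<in> {0..1}" for r
  proof (cases "r = 1")
    case True
    then show ?thesis unfolding u_def using s0 sp[of 1] Ep by simp
  next
    case False
    then have "s (1 - r) > 0" using r sp[of "1 - r"] by auto
    moreover have "E * s r \<ge> 0" using Ep sn[OF r] by simp
    ultimately show ?thesis unfolding u_def by simp
  qed
  have "((\<lambda>r. u1 r / u r) has_integral (ln (u 1) - ln (u 0))) {0..1}"
  proof (rule fundamental_theorem_of_calculus)
    fix x :: real assume x: "x \<in> {0..1}"
    have "((\<lambda>r. ln (u r)) has_real_derivative 1 / u x * u1 x) (at x)"
      by (rule DERIV_chain2[OF DERIV_ln_divide[OF up[OF x]] du])
    then have "((\<lambda>r. ln (u r)) has_real_derivative 1 / u x * u1 x) (at x within {0..1})"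
      by (rule has_field_derivative_at_within)
    then have "((\<lambda>r. ln (u r)) has_real_derivative u1 x / u x) (at x within {0..1})"
      by simp
    then show "((\<lambda>r. ln (u r)) has_vector_derivative u1 x / u x) (at x within {0..1})"
      by (simp add: has_real_derivative_iff_has_vector_derivative)
  qed simp
  moreover have "ln (u 1) - ln (u 0) = D0"
  proof -
    have s1: "s 1 > 0" using sp[of 1] by simp
    have "u 1 = E * s 1" "u 0 = s 1" unfolding u_def using s0 by simp_all
    then show ?thesis using s1 Ep by (simp add: ln_mult E_def)
  qed
  ultimately have "((\<lambda>r. u1 r / u r) has_integral D0) {0..1}" by simp
  then show ?thesis using du du1 up by blast
qed


lemma exists_sol:
  assumes d: "d > 0" and lam: "real d * lam < pi\<^sup>2"
  shows "\<exists>L. is_sol d lam D L"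
proof -
  define D0 where "D0 = (\<Sum>k<d. D k)"
  define mu where "mu = real d * lam"
  obtain u u1 where du: "\<And>r. (u has_real_derivative u1 r) (at r)"
    and du1: "\<And>r. (u1 has_real_derivative (- mu * u r)) (at r)"
    and up: "\<And>r. r \<in> {0..1} \<Longrightarrow> u r > 0"
    and hS: "((\<lambda>r. u1 r / u r) has_integral D0) {0..1}"
    using u_exists[of mu D0] lam unfolding mu_def by blast
  define S where "S r = u1 r / u r" for r
  have dS: "(S has_real_derivative (-(S r)\<^sup>2 - mu)) (at r within {0..1})" if r: "r \<in> {0..1}" for r
  proof -
    have "(S has_real_derivative ((- mu * u r) * u r - u1 r * u1 r) / (u r * u r)) (at r within {0..1})"
      unfolding S_def[abs_def]
      by (rule DERIV_divide[OF has_field_derivative_at_within[OF du1] has_field_derivative_at_within[OF du]])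
         (use up[OF r] in simp)
    moreover have "((- mu * u r) * u r - u1 r * u1 r) / (u r * u r) = -(S r)\<^sup>2 - mu"
      using up[OF r] unfolding S_def by (simp add: field_simps power2_eq_square)
    ultimately show ?thesis by simp
  qed
  have dI: "((\<lambda>r. 1 / u r) has_real_derivative (0 * u r - 1 * u1 r) / (u r * u r)) (at r within {0..1})"
    if r: "r \<in> {0..1}" for r
    by (rule DERIV_divide[OF DERIV_const has_field_derivative_at_within[OF du]])
       (use up[OF r] in simp)
  have cI: "continuous_on {0..1} (\<lambda>r. 1 / u r)" by (rule deriv_cont01[of _ "\<lambda>r. (0 * u r - 1 * u1 r) / (u r * u r)"]) (use dI in blast)
  define J where "J = integral {0..1} (\<lambda>r. 1 / u r)"
  have hJ: "((\<lambda>r. 1 / u r) has_integral J) {0..1}"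
    unfolding J_def using integrable_continuous_interval[OF cI] by (simp add: has_integral_integral)
  have Jp: "J > 0" using int_pos[OF cI _ hJ] up by simp
  define B where "B i = (D i - D0 / real d) / J" for i
  define L where "L i r = S r / real d + B i * (1 / u r)" for i r
  have sumB: "(\<Sum>k<d. B k) = 0"
    unfolding B_def using d by (simp add: sum_divide_distrib[symmetric] sum_subtractf D0_def)
  have sumL: "(\<Sum>k<d. L k r) = S r" for r
  proof -
    have "(\<Sum>k<d. L k r) = real d * (S r / real d) + (\<Sum>k<d. B k) * (1 / u r)"
      unfolding L_def by (simp add: sum.distrib sum_distrib_right sum_divide_distrib)
    then show ?thesis using sumB d by simp
  qed
  have dL: "(L i has_real_derivative (- (\<Sum>k<d. L k r) * L i r - lam)) (at r within {0..1})"
    if r: "r \<in> {0..1}" for i r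
  proof -
    have "(L i has_real_derivative (-(S r)\<^sup>2 - mu) / real d + B i * ((0 * u r - 1 * u1 r) / (u r * u r)))
        (at r within {0..1})"
      unfolding L_def[abs_def]
      by (rule DERIV_add[OF DERIV_cdivide[OF dS[OF r]] DERIV_cmult[OF dI[OF r]]])
    moreover have "(-(S r)\<^sup>2 - mu) / real d + B i * ((0 * u r - 1 * u1 r) / (u r * u r))
        = - (\<Sum>k<d. L k r) * L i r - lam"
      using up[OF r] d unfolding sumL unfolding L_def S_def mu_def
      by (simp add: field_simps power2_eq_square)
    ultimately show ?thesis by simp
  qed
  have cL: "continuous_on {0..1} (L k)" for k
    by (rule deriv_cont01[of _ "\<lambda>r. - (\<Sum>j<d. L j r) * L k r - lam"]) (use dL in blast)
  show ?thesis
  proof (rule exI[of _ L], unfold is_sol_def, intro allI impI conjI ballI)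
    fix i assume i: "i < d"
    show "C1_01 (L i)" unfolding C1_01_def
      by (rule exI[of _ "\<lambda>r. - (\<Sum>k<d. L k r) * L i r - lam"])
         (use dL in \<open>auto intro!: continuous_intros cL\<close>)
    show "\<And>r. r \<in> {0..1} \<Longrightarrow> (L i has_real_derivative - (\<Sum>k<d. L k r) * L i r - lam) (at r within {0..1})"
      by (rule dL)
    have "(L i has_integral (D0 / real d + B i * J)) {0..1}"
      unfolding L_def[abs_def] S_def
      by (rule has_integral_add[OF has_integral_divide[OF hS] has_integral_mult_right[OF hJ]])
    moreover have "D0 / real d + B i * J = D i" unfolding B_def using Jp by simp
    ultimately show "(L i has_integral D i) {0..1}" by simp
  qed
qed


theorem lemma3p2:
  fixes d :: nat and lam :: real and D :: "nat \<Rightarrow> real"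
  assumes "d \<ge> 2"
  shows "((\<exists>L. is_sol d lam D L) \<longleftrightarrow> lam < pi\<^sup>2 / real d) \<and>
         (\<forall>L1 L2. is_sol d lam D L1 \<and> is_sol d lam D L2 \<longrightarrow>
            (\<forall>i<d. \<forall>r\<in>{0..1}. L1 i r = L2 i r))"
proof (rule conjI)
  have d: "d > 0" using assms by simp
  have eq: "lam < pi\<^sup>2 / real d \<longleftrightarrow> real d * lam < pi\<^sup>2"
    using d by (simp add: pos_less_divide_eq mult.commute)
  show "(\<exists>L. is_sol d lam D L) \<longleftrightarrow> lam < pi\<^sup>2 / real d"
  proof
    assume "\<exists>L. is_sol d lam D L"
    then obtain L where L: "is_sol d lam D L" by blast
    show "lam < pi\<^sup>2 / real d"
    proof (rule ccontr)
      assume "\<not> lam < pi\<^sup>2 / real d"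
      then have "real d * lam \<ge> pi\<^sup>2" using eq by simp
      then show False using no_sol[OF sol_props(1)[OF L]] by blast
    qed
  next
    assume "lam < pi\<^sup>2 / real d"
    then show "\<exists>L. is_sol d lam D L" using exists_sol[OF d] eq by blast
  qed
next
  show "\<forall>L1 L2. is_sol d lam D L1 \<and> is_sol d lam D L2 \<longrightarrow>
            (\<forall>i<d. \<forall>r\<in>{0..1}. L1 i r = L2 i r)"
  proof (rule allI, rule allI, rule impI)
  fix L1 L2 assume "is_sol d lam D L1 \<and> is_sol d lam D L2"
  then have s1: "is_sol d lam D L1" and s2: "is_sol d lam D L2" by auto
  define S1 where "S1 r = (\<Sum>k<d. L1 k r)" for r
  define S2 where "S2 r = (\<Sum>k<d. L2 k r)" for r
  have dS1: "\<forall>r\<in>{0..1}. (S1 has_real_derivative (-(S1 r)\<^sup>2 - real d * lam)) (at r within {0..1})"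
    using sol_props(1)[OF s1] unfolding S1_def[abs_def] by simp
  have dS2: "\<forall>r\<in>{0..1}. (S2 has_real_derivative (-(S2 r)\<^sup>2 - real d * lam)) (at r within {0..1})"
    using sol_props(1)[OF s2] unfolding S2_def[abs_def] by simp
  have iS1: "(S1 has_integral (\<Sum>k<d. D k)) {0..1}"
    using sol_props(2)[OF s1] unfolding S1_def[abs_def] by simp
  have iS2: "(S2 has_integral (\<Sum>k<d. D k)) {0..1}"
    using sol_props(2)[OF s2] unfolding S2_def[abs_def] by simp
  have cS1: "continuous_on {0..1} S1" using deriv_cont01[OF dS1] .
  have cS2: "continuous_on {0..1} S2" using deriv_cont01[OF dS2] .
  have SS: "\<forall>r\<in>{0..1}. S1 r - S2 r = 0"
  proof (rule zero_int_unique[where w="\<lambda>r. S1 r - S2 r" and a="\<lambda>r. S1 r + S2 r"])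
    show "continuous_on {0..1} (\<lambda>r. S1 r + S2 r)" by (intro continuous_intros cS1 cS2)
    show "\<forall>r\<in>{0..1}. ((\<lambda>r. S1 r - S2 r) has_real_derivative
        - (S1 r + S2 r) * (S1 r - S2 r)) (at r within {0..1})"
    proof
      fix r :: real assume r: "r \<in> {0..1}"
      have "((\<lambda>r. S1 r - S2 r) has_real_derivative
          (-(S1 r)\<^sup>2 - real d * lam) - (-(S2 r)\<^sup>2 - real d * lam)) (at r within {0..1})"
        using dS1 dS2 r by (intro DERIV_diff) auto
      then show "((\<lambda>r. S1 r - S2 r) has_real_derivative
        - (S1 r + S2 r) * (S1 r - S2 r)) (at r within {0..1})"
        by (simp add: algebra_simps power2_eq_square)
    qed
    show "((\<lambda>r. S1 r - S2 r) has_integral 0) {0..1}"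
      using has_integral_diff[OF iS1 iS2] by simp
  qed
  show "\<forall>i<d. \<forall>r\<in>{0..1}. L1 i r = L2 i r"
  proof (intro allI impI)
    fix i assume i: "i < d"
    have dL1: "\<forall>r\<in>{0..1}. (L1 i has_real_derivative (- S1 r * L1 i r - lam)) (at r within {0..1})"
      using s1 i unfolding is_sol_def S1_def by blast
    have dL2: "\<forall>r\<in>{0..1}. (L2 i has_real_derivative (- S2 r * L2 i r - lam)) (at r within {0..1})"
      using s2 i unfolding is_sol_def S2_def by blast
    have iL1: "(L1 i has_integral D i) {0..1}" using s1 i unfolding is_sol_def by blast
    have iL2: "(L2 i has_integral D i) {0..1}" using s2 i unfolding is_sol_def by blast
    have "\<forall>r\<in>{0..1}. L1 i r - L2 i r = 0"
    proof (rule zero_int_unique[where w="\<lambda>r. L1 i r - L2 i r" and a=S1])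
      show "continuous_on {0..1} S1" by (rule cS1)
      show "\<forall>r\<in>{0..1}. ((\<lambda>r. L1 i r - L2 i r) has_real_derivative
          - S1 r * (L1 i r - L2 i r)) (at r within {0..1})"
      proof
        fix r :: real assume r: "r \<in> {0..1}"
        have "((\<lambda>r. L1 i r - L2 i r) has_real_derivative
            (- S1 r * L1 i r - lam) - (- S2 r * L2 i r - lam)) (at r within {0..1})"
          using dL1 dL2 r by (intro DERIV_diff) auto
        moreover have "S2 r = S1 r" using SS r by simp
        ultimately show "((\<lambda>r. L1 i r - L2 i r) has_real_derivative
          - S1 r * (L1 i r - L2 i r)) (at r within {0..1})"
          by (simp add: algebra_simps)
      qed
      show "((\<lambda>r. L1 i r - L2 i r) has_integral 0) {0..1}"
        using has_integral_diff[OF iL1 iL2] by simp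
    qed
    then show "\<forall>r\<in>{0..1}. L1 i r = L2 i r" by simp
  qed
  qed
qed


end
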